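(* Let $\mathcal G=(\mathcal V,\mathcal E,W)$ be a network, $h\in\mathbb{R}^{\mathcal V}$, and consider the SNC game with binary actions on $\mathcal G$ with external field $h$. Then: (i) the game is an exact potential game if and only if $\mathcal G$ is undirected. Moreover, if $\mathcal G$ is undirected, then: (ii) a function $\Phi:\mathcal X\to\mathbb{R}$ is an exact potential function for the game if and only if there exists a constant $C\in\mathbb{R}$ such that $\Phi(x)=\frac12\sum_{i,j\in\mathcal V}W_{ij}x_ix_j+\sum_{i\in\mathcal V}h_ix_i+C$ for all $x\in\mathcal X$; (iii) there exists a globally BR-stable set $\overline{\mathcal N}$ with $\arg\max_{x\in\mathcal X}\Phi(x)\subseteq\overline{\mathcal N}\subseteq\mathcal N$, where $\Phi(x)=\frac12\sum_{i,j}W_{ij}x_ix_j+\sum_ih_ix_i$ and $\mathcal N$ is the set of Nash equilibria.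
   Context: A network is a triple $\mathcal G=(\mathcal V,\mathcal E,W)$ where $\mathcal V$ is a finite nonempty set, $\mathcal E\subseteq\mathcal V\times\mathcal V$, and $W\in\mathbb{R}^{\mathcal V\times\mathcal V}$ has zero diagonal and satisfies $W_{ij}\neq0$ iff $(i,j)\in\mathcal E$ (weights may have either sign). It is undirected if $W=W^T$. The SNC game with binary actions on $\mathcal G$ with external field $h\in\mathbb{R}^{\mathcal V}$ has player set $\mathcal V$, action set $\{-1,+1\}$ for each player, strategy profiles $\mathcal X=\{\pm1\}^{\mathcal V}$, and utilities $u_i(x)=h_ix_i+x_i\sum_{j\in\mathcal V}W_{ij}x_j$. Best responses $\mathcal B_i(x_{-i})=\arg\max_{x_i\in\{\pm1\}}u_i(x_i,x_{-i})$; Nash equilibrium: $x^*_i\in\mathcal B_i(x^*_{-i})$ for all $i$. The game is exact potential with potential $\Phi:\mathcal X\to\mathbb{R}$ if $u_i(y)-u_i(x)=\Phi(y)-\Phi(x)$ whenever $x_{-i}=y_{-i}$. A BR-path of length $l\ge0$ from $x$ to $y$ is a sequence $x^{(0)}=x,\dots,x^{(l)}=y$ such that for each $k$ some player $i_k$ has $x^{(k)}_{-i_k}=x^{(k-1)}_{-i_k}$ and $x^{(k)}_{i_k}\in\mathcal B_{i_k}(x^{(k-1)}_{-i_k})\setminus\{x^{(k-1)}_{i_k}\}$. A set $\mathcal X^*\subseteq\mathcal X$ is globally BR-reachable if from every profile there is a BR-path to some element of $\mathcal X^*$; BR-invariant if there is no BR-path from an element of $\mathcal X^*$ to an element outside;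 globally BR-stable if both. *)

theory Defs
  imports Complex_Main
begin

text \<open>The vertex set is the (finite, nonempty) universe of a type 'v :: finite.
  Weights W :: 'v => 'v => real; edges E :: ('v * 'v) set.\<close>

definition network :: "('v \<times> 'v) set \<Rightarrow> ('v \<Rightarrow> 'v \<Rightarrow> real) \<Rightarrow> bool" where
  "network E W \<longleftrightarrow> (\<forall>i. W i i = 0) \<and> (\<forall>i j. W i j \<noteq> 0 \<longleftrightarrow> (i, j) \<in> E)"

definition undirected :: "('v \<Rightarrow> 'v \<Rightarrow> real) \<Rightarrow> bool" where
  "undirected W \<longleftrightarrow> (\<forall>i j. W i j = W j i)"

definition profiles :: "('v \<Rightarrow> real) set" where
  "profiles = {x. \<forall>i. x i \<in> {-1, 1}}"

definition util :: "('v::finite \<Rightarrow> 'v \<Rightarrow> real) \<Rightarrow> ('v \<Rightarrow> real) \<Rightarrow> 'v \<Rightarrow> ('v \<Rightarrow> real) \<Rightarrow> real" where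
  "util W h i x = h i * x i + x i * (\<Sum>j\<in>UNIV. W i j * x j)"

definition best_resp :: "('v::finite \<Rightarrow> 'v \<Rightarrow> real) \<Rightarrow> ('v \<Rightarrow> real) \<Rightarrow> 'v \<Rightarrow> ('v \<Rightarrow> real) \<Rightarrow> real set" where
  "best_resp W h i x = {a \<in> {-1, 1}. \<forall>b \<in> {-1, 1}. util W h i (x(i := b)) \<le> util W h i (x(i := a))}"

definition nash :: "('v::finite \<Rightarrow> 'v \<Rightarrow> real) \<Rightarrow> ('v \<Rightarrow> real) \<Rightarrow> ('v \<Rightarrow> real) set" where
  "nash W h = {x \<in> profiles. \<forall>i. x i \<in> best_resp W h i x}"

definition exact_potential :: "('v::finite \<Rightarrow> 'v \<Rightarrow> real) \<Rightarrow> ('v \<Rightarrow> real) \<Rightarrow> (('v \<Rightarrow> real) \<Rightarrow> real) \<Rightarrow> bool" where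
  "exact_potential W h \<Phi> \<longleftrightarrow>
     (\<forall>x \<in> profiles. \<forall>y \<in> profiles. \<forall>i. (\<forall>j. j \<noteq> i \<longrightarrow> x j = y j) \<longrightarrow>
        util W h i y - util W h i x = \<Phi> y - \<Phi> x)"

definition exact_potential_game :: "('v::finite \<Rightarrow> 'v \<Rightarrow> real) \<Rightarrow> ('v \<Rightarrow> real) \<Rightarrow> bool" where
  "exact_potential_game W h \<longleftrightarrow> (\<exists>\<Phi>. exact_potential W h \<Phi>)"

definition br_step :: "('v::finite \<Rightarrow> 'v \<Rightarrow> real) \<Rightarrow> ('v \<Rightarrow> real) \<Rightarrow> ('v \<Rightarrow> real) \<Rightarrow> ('v \<Rightarrow> real) \<Rightarrow> bool" where
  "br_step W h x y \<longleftrightarrow>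
     (\<exists>i. (\<forall>j. j \<noteq> i \<longrightarrow> y j = x j) \<and> y i \<in> best_resp W h i x \<and> y i \<noteq> x i)"

definition br_path :: "('v::finite \<Rightarrow> 'v \<Rightarrow> real) \<Rightarrow> ('v \<Rightarrow> real) \<Rightarrow> ('v \<Rightarrow> real) \<Rightarrow> ('v \<Rightarrow> real) \<Rightarrow> bool" where
  "br_path W h = (br_step W h)\<^sup>*\<^sup>*"

definition globally_BR_reachable :: "('v::finite \<Rightarrow> 'v \<Rightarrow> real) \<Rightarrow> ('v \<Rightarrow> real) \<Rightarrow> ('v \<Rightarrow> real) set \<Rightarrow> bool" where
  "globally_BR_reachable W h S \<longleftrightarrow> (\<forall>x \<in> profiles. \<exists>y \<in> S. br_path W h x y)"

definition BR_invariant :: "('v::finite \<Rightarrow> 'v \<Rightarrow> real) \<Rightarrow> ('v \<Rightarrow> real) \<Rightarrow> ('v \<Rightarrow> real) set \<Rightarrow> bool" where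
  "BR_invariant W h S \<longleftrightarrow> (\<forall>x \<in> S. \<forall>y. br_path W h x y \<longrightarrow> y \<in> S)"

definition globally_BR_stable :: "('v::finite \<Rightarrow> 'v \<Rightarrow> real) \<Rightarrow> ('v \<Rightarrow> real) \<Rightarrow> ('v \<Rightarrow> real) set \<Rightarrow> bool" where
  "globally_BR_stable W h S \<longleftrightarrow> S \<subseteq> profiles \<and> globally_BR_reachable W h S \<and> BR_invariant W h S"

definition std_potential :: "('v::finite \<Rightarrow> 'v \<Rightarrow> real) \<Rightarrow> ('v \<Rightarrow> real) \<Rightarrow> ('v \<Rightarrow> real) \<Rightarrow> real" where
  "std_potential W h x = (1/2) * (\<Sum>i\<in>UNIV. \<Sum>j\<in>UNIV. W i j * x i * x j) + (\<Sum>i\<in>UNIV. h i * x i)"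

definition argmax_on :: "(('v \<Rightarrow> real) \<Rightarrow> real) \<Rightarrow> ('v \<Rightarrow> real) set" where
  "argmax_on \<Phi> = {x \<in> profiles. \<forall>y \<in> profiles. \<Phi> y \<le> \<Phi> x}"

end

theory Submission
  imports Defs "HOL-Library.FuncSet"
begin

lemma upd_sum:
  fixes f :: "'v::finite \<Rightarrow> 'b \<Rightarrow> real"
  shows "(\<Sum>k\<in>UNIV. f k ((x(m:=c)) k)) = (\<Sum>k\<in>UNIV. f k (x k)) - f m (x m) + f m c"
proof -
  have "(\<Sum>k\<in>UNIV. f k ((x(m:=c)) k)) =
        (\<Sum>k\<in>UNIV. f k (x k) + (if k = m then f m c - f m (x m) else 0))"
    by (rule sum.cong) auto
  also have "\<dots> = (\<Sum>k\<in>UNIV. f k (x k)) - f m (x m) + f m c"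
    by (simp add: sum.distrib)
  finally show ?thesis .
qed

lemma util_upd:
  assumes "W i i = 0"
  shows "util W h i (x(i:=a)) = a * (h i + (\<Sum>k\<in>UNIV. W i k * x k))"
proof -
  have "(\<Sum>k\<in>UNIV. W i k * (x(i:=a)) k) = (\<Sum>k\<in>UNIV. W i k * x k)"
    using upd_sum[of "\<lambda>k v. W i k * v" x i a] assms by simp
  then show ?thesis unfolding util_def by (simp add: algebra_simps)
qed

lemma util_eq:
  assumes "W i i = 0"
  shows "util W h i x = x i * (h i + (\<Sum>k\<in>UNIV. W i k * x k))"
  using util_upd[where W=W and i=i and x=x and a="x i" and h=h, OF assms] by simp

lemma std_alt:
  "std_potential W h x = (1/2) * (\<Sum>k\<in>UNIV. x k * (\<Sum>l\<in>UNIV. W k l * x l)) + (\<Sum>i\<in>UNIV. h i * x i)"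
  unfolding std_potential_def
  by (simp add: sum_distrib_left algebra_simps)

lemma std_upd:
  assumes diag: "\<And>i. W i i = 0" and sym: "undirected W"
  shows "std_potential W h (x(m:=c)) - std_potential W h x
         = (c - x m) * (h m + (\<Sum>k\<in>UNIV. W m k * x k))"
proof -
  define S where "S k = (\<Sum>l\<in>UNIV. W k l * x l)" for k
  have S1: "(\<Sum>l\<in>UNIV. W k l * (x(m:=c)) l) = S k - W k m * x m + W k m * c" for k
    using upd_sum[of "\<lambda>l v. W k l * v" x m c] unfolding S_def by simp
  have "(\<Sum>k\<in>UNIV. (x(m:=c)) k * (\<Sum>l\<in>UNIV. W k l * (x(m:=c)) l))
       = (\<Sum>k\<in>UNIV. (x(m:=c)) k * (S k - W k m * x m + W k m * c))"
    by (simp only: S1)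
  also have "\<dots> = (\<Sum>k\<in>UNIV. (x(m:=c)) k * S k + (c - x m) * ((x(m:=c)) k * W k m))"
    by (rule sum.cong) (auto simp: algebra_simps)
  also have "\<dots> = (\<Sum>k\<in>UNIV. (x(m:=c)) k * S k) + (c - x m) * (\<Sum>k\<in>UNIV. (x(m:=c)) k * W k m)"
    by (simp add: sum.distrib sum_distrib_left)
  also have "(\<Sum>k\<in>UNIV. (x(m:=c)) k * S k) = (\<Sum>k\<in>UNIV. x k * S k) - x m * S m + c * S m"
    using upd_sum[of "\<lambda>k v. v * S k" x m c] by simp
  also have "(\<Sum>k\<in>UNIV. (x(m:=c)) k * W k m) = (\<Sum>k\<in>UNIV. x k * W k m)"
    using upd_sum[of "\<lambda>k v. v * W k m" x m c] diag by simp
  also have "\<dots> = S m" unfolding S_def using sym unfolding undirected_def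
    by (simp add: mult.commute)
  finally have Q: "(\<Sum>k\<in>UNIV. (x(m:=c)) k * (\<Sum>l\<in>UNIV. W k l * (x(m:=c)) l))
     = (\<Sum>k\<in>UNIV. x k * S k) + 2 * (c - x m) * S m" by (simp add: algebra_simps)
  have H: "(\<Sum>i\<in>UNIV. h i * (x(m:=c)) i) = (\<Sum>i\<in>UNIV. h i * x i) - h m * x m + h m * c"
    using upd_sum[of "\<lambda>k v. h k * v" x m c] by simp
  have Sm: "S m = (\<Sum>k\<in>UNIV. W m k * x k)" by (simp add: S_def)
  have Aeq: "(\<Sum>k\<in>UNIV. x k * (\<Sum>l\<in>UNIV. W k l * x l)) = (\<Sum>k\<in>UNIV. x k * S k)"
    by (simp add: S_def)
  have alg: "\<And>A B Sm' hm xm c :: real. 1/2 * (A + 2 * (c - xm) * Sm') + (B - hm * xm + hm * c) - (1/2 * A + B)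
      = (c - xm) * (hm + Sm')" by (simp add: algebra_simps)
  show ?thesis unfolding std_alt Q H Aeq Sm[symmetric] by (rule alg)
qed

lemma std_exact:
  fixes W :: "'v::finite \<Rightarrow> 'v \<Rightarrow> real"
  assumes diag: "\<And>i. W i i = 0" and sym: "undirected W"
  shows "exact_potential W h (std_potential W h)"
  unfolding exact_potential_def
proof (intro ballI allI impI)
  fix x y :: "'v \<Rightarrow> real" and i :: 'v
  assume "\<forall>j. j \<noteq> i \<longrightarrow> x j = y j"
  then have y: "y = x(i := y i)" by auto
  have "util W h i y = y i * (h i + (\<Sum>k\<in>UNIV. W i k * x k))"
    by (subst y, rule util_upd[OF diag])
  moreover have "util W h i x = x i * (h i + (\<Sum>k\<in>UNIV. W i k * x k))"
    by (rule util_eq[OF diag])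
  moreover have "std_potential W h y - std_potential W h x = (y i - x i) * (h i + (\<Sum>k\<in>UNIV. W i k * x k))"
    by (subst y, rule std_upd[OF diag sym])
  ultimately show "util W h i y - util W h i x = std_potential W h y - std_potential W h x"
    by (simp add: algebra_simps)
qed

lemma const_lemma:
  fixes D :: "('v::finite \<Rightarrow> real) \<Rightarrow> real"
  assumes inv: "\<forall>x\<in>profiles. \<forall>y\<in>profiles. \<forall>i. (\<forall>j. j \<noteq> i \<longrightarrow> x j = y j) \<longrightarrow> D y = D x"
  assumes x: "x \<in> profiles" and y: "y \<in> profiles"
  shows "D x = D y"
proof -
  have "\<And>x. x \<in> profiles \<Longrightarrow> {j. x j \<noteq> y j} \<subseteq> S \<Longrightarrow> D x = D y" if "finite S" for S :: "'v set"
    using that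
  proof (induction S rule: finite_induct)
    case empty
    then have "x = y" by auto
    then show ?case by simp
  next
    case (insert a S)
    define z where "z = x(a := y a)"
    have zp: "z \<in> profiles" using insert.prems y unfolding z_def profiles_def by auto
    have "{j. z j \<noteq> y j} \<subseteq> S" using insert.prems unfolding z_def by auto
    then have "D z = D y" using insert.IH[OF zp] by simp
    moreover have "D z = D x"
    proof -
      have "\<forall>j. j \<noteq> a \<longrightarrow> x j = z j" unfolding z_def by simp
      then show ?thesis using inv insert.prems(1) zp by blast
    qed
    ultimately show ?case by simp
  qed
  from this[of UNIV x] x show ?thesis by simp
qed

lemma finite_profiles: "finite (profiles :: ('v::finite \<Rightarrow> real) set)"
proof -
  have "profiles \<subseteq> Pi\<^sub>E UNIV (\<lambda>_::'v. {-1, 1::real})"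
    unfolding profiles_def PiE_UNIV_domain by auto
  moreover have "finite (Pi\<^sub>E UNIV (\<lambda>_::'v. {-1, 1::real}))"
    by (rule finite_PiE) auto
  ultimately show ?thesis by (rule finite_subset)
qed

lemma potential_sym:
  assumes diag: "\<And>i. W i i = 0" and P: "exact_potential W h \<Phi>"
  shows "W i j = W j i"
proof (cases "i = j")
  case True then show ?thesis by simp
next
  case False
  define x0 :: "'a \<Rightarrow> real" where "x0 = (\<lambda>_. 1)"
  define p where "p a b = x0(j := b, i := a)" for a b
  have pp: "a \<in> {-1,1} \<Longrightarrow> b \<in> {-1,1} \<Longrightarrow> p a b \<in> profiles" for a b
    unfolding p_def x0_def profiles_def by auto
  have ui: "util W h i (p a b) = a * (h i + ((\<Sum>k\<in>UNIV. W i k * x0 k) - W i j + W i j * b))" for a b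
    unfolding p_def using util_upd[where W=W and i=i and h=h and x="x0(j:=b)" and a=a, OF diag] upd_sum[of "\<lambda>k v. W i k * v" x0 j b]
    by (simp add: x0_def)
  have pj: "p a b = x0(i := a, j := b)" for a b unfolding p_def using False by (simp add: fun_upd_twist)
  have uj: "util W h j (p a b) = b * (h j + ((\<Sum>k\<in>UNIV. W j k * x0 k) - W j i + W j i * a))" for a b
    unfolding pj using util_upd[where W=W and i=j and h=h and x="x0(i:=a)" and a=b, OF diag] upd_sum[of "\<lambda>k v. W j k * v" x0 i a]
    by (simp add: x0_def)
  have offi: "\<forall>k. k \<noteq> i \<longrightarrow> p a b k = p a' b k" for a a' b unfolding p_def by auto
  have offj: "\<forall>k. k \<noteq> j \<longrightarrow> p a b k = p a b' k" for a b b' unfolding p_def using False by auto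
  have E: "util W h k y - util W h k x = \<Phi> y - \<Phi> x"
    if "x \<in> profiles" "y \<in> profiles" "\<forall>l. l \<noteq> k \<longrightarrow> x l = y l" for x y k
    using P that unfolding exact_potential_def by blast
  have E1: "util W h i (p 1 1) - util W h i (p (-1) 1) = \<Phi> (p 1 1) - \<Phi> (p (-1) 1)"
    by (rule E) (auto simp: pp offi)
  have E2: "util W h i (p 1 (-1)) - util W h i (p (-1) (-1)) = \<Phi> (p 1 (-1)) - \<Phi> (p (-1) (-1))"
    by (rule E) (auto simp: pp offi)
  have E3: "util W h j (p 1 1) - util W h j (p 1 (-1)) = \<Phi> (p 1 1) - \<Phi> (p 1 (-1))"
    by (rule E) (auto simp: pp offj)
  have E4: "util W h j (p (-1) 1) - util W h j (p (-1) (-1)) = \<Phi> (p (-1) 1) - \<Phi> (p (-1) (-1))"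
    by (rule E) (auto simp: pp offj)
  obtain Ai Aj where Ai: "(\<Sum>k\<in>UNIV. W i k * x0 k) = Ai" and Aj: "(\<Sum>k\<in>UNIV. W j k * x0 k) = Aj" by blast
  show ?thesis using E1 E2 E3 E4 unfolding ui uj Ai Aj by (simp add: algebra_simps)
qed


lemma br_step_mono:
  assumes P: "exact_potential W h \<Phi>" and st: "br_step W h x y" and x: "x \<in> profiles"
  shows "y \<in> profiles \<and> \<Phi> x \<le> \<Phi> y"
proof -
  obtain i where off: "\<forall>j. j \<noteq> i \<longrightarrow> y j = x j" and br: "y i \<in> best_resp W h i x"
    using st unfolding br_step_def by blast
  have yx: "y = x(i := y i)" using off by auto
  have yi: "y i \<in> {-1,1}" using br unfolding best_resp_def by auto
  have yp: "y \<in> profiles" unfolding profiles_def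
  proof (intro CollectI allI)
    fix j show "y j \<in> {-1,1}"
    proof (cases "j = i")
      case True then show ?thesis using yi by simp
    next
      case False then show ?thesis using off x unfolding profiles_def by auto
    qed
  qed
  have xi: "x i \<in> {-1,1}" using x unfolding profiles_def by auto
  have "util W h i (x(i := x i)) \<le> util W h i (x(i := y i))"
    using br xi unfolding best_resp_def by blast
  then have "util W h i x \<le> util W h i y" using yx by simp
  moreover have "util W h i y - util W h i x = \<Phi> y - \<Phi> x"
  proof -
    have "\<forall>j. j \<noteq> i \<longrightarrow> x j = y j" using off by simp
    then show ?thesis using P x yp unfolding exact_potential_def by blast
  qed
  ultimately show ?thesis using yp by simp
qed

lemma br_path_mono:
  assumes P: "exact_potential W h \<Phi>" and pth: "br_path W h x y" and x: "x \<in> profiles"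
  shows "y \<in> profiles \<and> \<Phi> x \<le> \<Phi> y"
  using pth[unfolded br_path_def]
proof (induction rule: rtranclp_induct)
  case base then show ?case using x by simp
next
  case (step y z)
  then show ?case using br_step_mono[OF P step(2)] by force
qed

lemma improve:
  assumes P: "exact_potential W h \<Phi>" and x: "x \<in> profiles" and nn: "x \<notin> nash W h"
  shows "\<exists>y. br_step W h x y \<and> \<Phi> x < \<Phi> y"
proof -
  obtain i where ni: "x i \<notin> best_resp W h i x" using nn x unfolding nash_def by blast
  have xi: "x i \<in> {-1,1}" using x unfolding profiles_def by auto
  then obtain b where b: "b \<in> {-1,1}" and gt: "util W h i (x(i := x i)) < util W h i (x(i := b))"
    using ni unfolding best_resp_def by force
  have bne: "b \<noteq> x i" using gt by auto
  have "b \<in> best_resp W h i x"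
    unfolding best_resp_def
  proof (intro CollectI conjI ballI)
    show "b \<in> {-1,1}" by fact
    fix b' :: real assume "b' \<in> {-1,1}"
    then have "b' = b \<or> b' = x i" using b xi bne by auto
    then show "util W h i (x(i := b')) \<le> util W h i (x(i := b))" using gt by auto
  qed
  then have st: "br_step W h x (x(i := b))" unfolding br_step_def using bne by auto
  have yp: "x(i := b) \<in> profiles" using x b unfolding profiles_def by auto
  have "util W h i (x(i := b)) - util W h i x = \<Phi> (x(i := b)) - \<Phi> x"
    using P x yp unfolding exact_potential_def by auto
  then show ?thesis using st gt by auto
qed

theorem proposition1:
  fixes E :: "('v::finite \<times> 'v) set" and W :: "'v \<Rightarrow> 'v \<Rightarrow> real" and h :: "'v \<Rightarrow> real"
  assumes "network E W"
  shows "(exact_potential_game W h \<longleftrightarrow> undirected W) \<and>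
         (undirected W \<longrightarrow>
            (\<forall>\<Phi>. exact_potential W h \<Phi> \<longleftrightarrow>
                  (\<exists>C::real. \<forall>x \<in> profiles. \<Phi> x = std_potential W h x + C)) \<and>
            (\<exists>N. globally_BR_stable W h N \<and>
                 argmax_on (std_potential W h) \<subseteq> N \<and> N \<subseteq> nash W h))"
proof -
  have diag: "\<And>i. W i i = 0" using assms unfolding network_def by auto
  have part1: "exact_potential_game W h \<longleftrightarrow> undirected W"
  proof
    assume "exact_potential_game W h"
    then obtain \<Phi> where P: "exact_potential W h \<Phi>" unfolding exact_potential_game_def by blast
    show "undirected W" unfolding undirected_def
    proof (intro allI)
      fix i j show "W i j = W j i"
        by (rule potential_sym[where W=W and h=h and \<Phi>=\<Phi> and i=i and j=j]) (use diag P in auto)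
    qed
  next
    assume "undirected W"
    then show "exact_potential_game W h" unfolding exact_potential_game_def
      using std_exact[where W=W, OF diag] by blast
  qed
  moreover have "undirected W \<longrightarrow>
            (\<forall>\<Phi>. exact_potential W h \<Phi> \<longleftrightarrow>
                  (\<exists>C::real. \<forall>x \<in> profiles. \<Phi> x = std_potential W h x + C)) \<and>
            (\<exists>N. globally_BR_stable W h N \<and>
                 argmax_on (std_potential W h) \<subseteq> N \<and> N \<subseteq> nash W h)"
  proof
    assume und: "undirected W"
    have SP: "exact_potential W h (std_potential W h)" by (rule std_exact[where W=W, OF diag und])
    have part2: "exact_potential W h \<Phi> \<longleftrightarrow>
                  (\<exists>C::real. \<forall>x \<in> profiles. \<Phi> x = std_potential W h x + C)" for \<Phi>
    proof
      assume P: "exact_potential W h \<Phi>"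
      define D where "D x = \<Phi> x - std_potential W h x" for x
      have inv: "\<forall>x\<in>profiles. \<forall>y\<in>profiles. \<forall>i. (\<forall>j. j \<noteq> i \<longrightarrow> x j = y j) \<longrightarrow> D y = D x"
      proof (intro ballI allI impI)
        fix x y :: "'v \<Rightarrow> real" and i :: 'v assume xy: "x \<in> profiles" "y \<in> profiles" "\<forall>j. j \<noteq> i \<longrightarrow> x j = y j"
        have "util W h i y - util W h i x = \<Phi> y - \<Phi> x"
          using P xy unfolding exact_potential_def by blast
        moreover have "util W h i y - util W h i x = std_potential W h y - std_potential W h x"
          using SP xy unfolding exact_potential_def by blast
        ultimately show "D y = D x" unfolding D_def by simp
      qed
      define x0 :: "'v \<Rightarrow> real" where "x0 = (\<lambda>_. 1)"
      have x0: "x0 \<in> profiles" unfolding x0_def profiles_def by simp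
      show "\<exists>C::real. \<forall>x \<in> profiles. \<Phi> x = std_potential W h x + C"
      proof (intro exI ballI)
        fix x :: "'v \<Rightarrow> real" assume "x \<in> profiles"
        then have "D x = D x0" using const_lemma[OF inv _ x0] by blast
        then show "\<Phi> x = std_potential W h x + D x0" unfolding D_def by simp
      qed
    next
      assume "\<exists>C::real. \<forall>x \<in> profiles. \<Phi> x = std_potential W h x + C"
      then obtain C where C: "\<forall>x \<in> profiles. \<Phi> x = std_potential W h x + C" by blast
      show "exact_potential W h \<Phi>"
        using SP C unfolding exact_potential_def by auto
    qed
    define \<Psi> where "\<Psi> = std_potential W h"
    have SP': "exact_potential W h \<Psi>" using SP unfolding \<Psi>_def .
    define N where "N = {x \<in> profiles. \<forall>y. br_path W h x y \<longrightarrow> y \<in> nash W h}"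
    have Nn: "N \<subseteq> nash W h" unfolding N_def br_path_def by auto
    have Np: "N \<subseteq> profiles" unfolding N_def by auto
    have trans: "br_path W h x y \<Longrightarrow> br_path W h y z \<Longrightarrow> br_path W h x z" for x y z
      unfolding br_path_def by auto
    have Ninv: "BR_invariant W h N"
      unfolding BR_invariant_def
    proof (intro ballI allI impI)
      fix x y assume x: "x \<in> N" and p: "br_path W h x y"
      have "y \<in> profiles" using br_path_mono[OF SP' p] x Np by auto
      then show "y \<in> N" using x p trans unfolding N_def by blast
    qed
    have Nreach: "globally_BR_reachable W h N"
      unfolding globally_BR_reachable_def
    proof
      fix x :: "'v \<Rightarrow> real" assume x: "x \<in> profiles"
      define R where "R = {z. br_path W h x z}"
      have Rp: "R \<subseteq> profiles" unfolding R_def using br_path_mono[OF SP' _ x] by auto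
      have Rf: "finite R" using finite_subset[OF Rp finite_profiles] .
      have xR: "x \<in> R" unfolding R_def br_path_def by simp
      define M where "M = Max (\<Psi> ` R)"
      have "M \<in> \<Psi> ` R" unfolding M_def using Rf xR by (intro Max_in) auto
      then obtain z where zR: "z \<in> R" and zM: "\<Psi> z = M" by auto
      have zmax: "\<Psi> w \<le> \<Psi> z" if "w \<in> R" for w
        unfolding zM M_def using Rf that by (intro Max_ge) auto
      have "z \<in> N"
        unfolding N_def
      proof (intro CollectI conjI allI impI)
        show "z \<in> profiles" using zR Rp by auto
        fix y assume zy: "br_path W h z y"
        have yR: "y \<in> R" using zR zy trans unfolding R_def by blast
        have yp: "y \<in> profiles" using yR Rp by auto
        have "\<Psi> z \<le> \<Psi> y" using br_path_mono[OF SP' zy] zR Rp by auto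
        show "y \<in> nash W h"
        proof (rule ccontr)
          assume "y \<notin> nash W h"
          then obtain w where st: "br_step W h y w" and lt: "\<Psi> y < \<Psi> w"
            using improve[OF SP' yp] by blast
          have "w \<in> R" using yR st unfolding R_def br_path_def by auto
          then have "\<Psi> w \<le> \<Psi> z" by (rule zmax)
          then show False using lt \<open>\<Psi> z \<le> \<Psi> y\<close> by simp
        qed
      qed
      then show "\<exists>y\<in>N. br_path W h x y" using zR unfolding R_def by blast
    qed
    have Narg: "argmax_on \<Psi> \<subseteq> N"
    proof
      fix x assume xa: "x \<in> argmax_on \<Psi>"
      then have x: "x \<in> profiles" and xm: "\<forall>y\<in>profiles. \<Psi> y \<le> \<Psi> x"
        unfolding argmax_on_def by auto
      show "x \<in> N"
        unfolding N_def
      proof (intro CollectI conjI allI impI)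
        show "x \<in> profiles" by fact
        fix y assume xy: "br_path W h x y"
        have yp: "y \<in> profiles" and le: "\<Psi> x \<le> \<Psi> y" using br_path_mono[OF SP' xy x] by auto
        show "y \<in> nash W h"
        proof (rule ccontr)
          assume "y \<notin> nash W h"
          then obtain w where st: "br_step W h y w" and lt: "\<Psi> y < \<Psi> w"
            using improve[OF SP' yp] by blast
          have "w \<in> profiles" using br_step_mono[OF SP' st yp] by auto
          then have "\<Psi> w \<le> \<Psi> x" using xm by blast
          then show False using lt le by simp
        qed
      qed
    qed
    have "\<exists>N. globally_BR_stable W h N \<and>
                 argmax_on (std_potential W h) \<subseteq> N \<and> N \<subseteq> nash W h"
      using Np Nreach Ninv Narg Nn unfolding globally_BR_stable_def \<Psi>_def by blast
    with part2 show "(\<forall>\<Phi>. exact_potential W h \<Phi> \<longleftrightarrow>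
                  (\<exists>C::real. \<forall>x \<in> profiles. \<Phi> x = std_potential W h x + C)) \<and>
            (\<exists>N. globally_BR_stable W h N \<and>
                 argmax_on (std_potential W h) \<subseteq> N \<and> N \<subseteq> nash W h)" by blast
  qed
  ultimately show ?thesis by blast
qed

end
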